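(* Let $K$ be a field and $P$, $Q$ arbitrary posets. If the $K$-algebras $FI(P)$ and $FI(Q)$ are isomorphic, then the posets $P$ and $Q$ are isomorphic.
   Context: $K$ is a field, $P$ an arbitrary poset. $I(P)$ is the set of functions $\alpha$ assigning to each pair $x\le y$ in $P$ a value $\alpha(x,y)\in K$. An element $\alpha\in I(P)$ is a finitary series if for all $x<y$ in $P$ there are only finitely many pairs $(u,v)$ with $x\le u<v\le y$ and $\alpha(u,v)\neq0$; $FI(P)$ is the set of finitary series. $FI(P)$ is an associative $K$-algebra under pointwise addition and convolution $(\alpha\beta)(x,y)=\sum_{x\le z\le y}\alpha(x,z)\beta(z,y)$. The same definitions apply to $Q$. *)

theory Defs
  imports Main
begin

text \<open>Elements of the incidence space I(P) over a poset P (a type of class order)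
  and a field K are represented as functions alpha :: P => P => K that vanish
  outside the pairs x <= y.\<close>

definition finitary :: "('a::order \<Rightarrow> 'a \<Rightarrow> 'k::field) \<Rightarrow> bool" where
  "finitary \<alpha> \<longleftrightarrow>
     (\<forall>x y. x < y \<longrightarrow>
        finite {(u, v). x \<le> u \<and> u < v \<and> v \<le> y \<and> \<alpha> u v \<noteq> 0})"

definition FI :: "('a::order \<Rightarrow> 'a \<Rightarrow> 'k::field) set" where
  "FI = {\<alpha>. (\<forall>x y. \<not> x \<le> y \<longrightarrow> \<alpha> x y = 0) \<and> finitary \<alpha>}"

definition fi_add :: "('a::order \<Rightarrow> 'a \<Rightarrow> 'k::field) \<Rightarrow> ('a \<Rightarrow> 'a \<Rightarrow> 'k) \<Rightarrow> ('a \<Rightarrow> 'a \<Rightarrow> 'k)" where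
  "fi_add \<alpha> \<beta> = (\<lambda>x y. \<alpha> x y + \<beta> x y)"

definition fi_smult :: "'k::field \<Rightarrow> ('a::order \<Rightarrow> 'a \<Rightarrow> 'k) \<Rightarrow> ('a \<Rightarrow> 'a \<Rightarrow> 'k)" where
  "fi_smult c \<alpha> = (\<lambda>x y. c * \<alpha> x y)"

text \<open>Convolution; for finitary series the sum has only finitely many nonzero terms,
  so we sum over the (finite) set of indices with nonzero terms.\<close>
definition fi_mult :: "('a::order \<Rightarrow> 'a \<Rightarrow> 'k::field) \<Rightarrow> ('a \<Rightarrow> 'a \<Rightarrow> 'k) \<Rightarrow> ('a \<Rightarrow> 'a \<Rightarrow> 'k)" where
  "fi_mult \<alpha> \<beta> = (\<lambda>x y. if x \<le> y then
      (\<Sum>z \<in> {z. x \<le> z \<and> z \<le> y \<and> \<alpha> x z * \<beta> z y \<noteq> 0}. \<alpha> x z * \<beta> z y) else 0)"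

definition fi_alg_iso ::
  "(('a::order \<Rightarrow> 'a \<Rightarrow> 'k::field) \<Rightarrow> ('b::order \<Rightarrow> 'b \<Rightarrow> 'k)) \<Rightarrow> bool" where
  "fi_alg_iso \<phi> \<longleftrightarrow>
     bij_betw \<phi> FI FI \<and>
     (\<forall>\<alpha>\<in>FI. \<forall>\<beta>\<in>FI. \<phi> (fi_add \<alpha> \<beta>) = fi_add (\<phi> \<alpha>) (\<phi> \<beta>)) \<and>
     (\<forall>c. \<forall>\<alpha>\<in>FI. \<phi> (fi_smult c \<alpha>) = fi_smult c (\<phi> \<alpha>)) \<and>
     (\<forall>\<alpha>\<in>FI. \<forall>\<beta>\<in>FI. \<phi> (fi_mult \<alpha> \<beta>) = fi_mult (\<phi> \<alpha>) (\<phi> \<beta>))"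

definition poset_iso :: "('a::order \<Rightarrow> 'b::order) \<Rightarrow> bool" where
  "poset_iso f \<longleftrightarrow> bij f \<and> (\<forall>x y. x \<le> y \<longleftrightarrow> f x \<le> f y)"

end

theory Submission
  imports Defs
begin

definition zo :: "('a::order \<Rightarrow> 'a \<Rightarrow> 'k::field) \<Rightarrow> bool" where
  "zo \<alpha> \<longleftrightarrow> (\<forall>x y. \<not> x \<le> y \<longrightarrow> \<alpha> x y = 0)"

lemma FI_zo: "\<alpha> \<in> FI \<Longrightarrow> zo \<alpha>"
  by (simp add: FI_def zo_def)

lemma FI_fin: "\<alpha> \<in> FI \<Longrightarrow> x < y \<Longrightarrow> finite {(u, v). x \<le> u \<and> u < v \<and> v \<le> y \<and> \<alpha> u v \<noteq> 0}"
  by (simp add: FI_def finitary_def)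

lemma zoD: "zo \<alpha> \<Longrightarrow> \<alpha> x y \<noteq> 0 \<Longrightarrow> x \<le> y"
  unfolding zo_def by blast

lemma supp_fin1:
  assumes "\<alpha> \<in> FI" shows "finite {z. \<alpha> x z \<noteq> 0 \<and> z \<le> y}"
proof (cases "x < y")
  case True
  let ?S = "{(u, v). x \<le> u \<and> u < v \<and> v \<le> y \<and> \<alpha> u v \<noteq> 0}"
  have "{z. \<alpha> x z \<noteq> 0 \<and> z \<le> y} \<subseteq> insert x (snd ` ?S)"
  proof
    fix z assume z: "z \<in> {z. \<alpha> x z \<noteq> 0 \<and> z \<le> y}"
    then have "x \<le> z" using zoD[OF FI_zo[OF assms]] by blast
    show "z \<in> insert x (snd ` ?S)"
    proof (cases "z = x")
      case False
      then have "(x, z) \<in> ?S" using z \<open>x \<le> z\<close> by auto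
      then show ?thesis by force
    qed simp
  qed
  then show ?thesis using FI_fin[OF assms True] finite_subset by blast
next
  case False
  have "{z. \<alpha> x z \<noteq> 0 \<and> z \<le> y} \<subseteq> {x}"
  proof
    fix z assume z: "z \<in> {z. \<alpha> x z \<noteq> 0 \<and> z \<le> y}"
    then have "z \<le> y" "x \<le> z" using zoD[OF FI_zo[OF assms], of x z] by auto
    then have "x \<le> y" by (rule order.trans[rotated])
    then have "x = y" using False by (simp add: order_less_le)
    then show "z \<in> {x}" using \<open>z \<le> y\<close> \<open>x \<le> z\<close> by simp
  qed
  then show ?thesis using finite_subset by blast
qed

lemma supp_fin2:
  assumes "\<alpha> \<in> FI" shows "finite {w. \<alpha> w y \<noteq> 0 \<and> x \<le> w}"
proof (cases "x < y")
  case True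
  let ?S = "{(u, v). x \<le> u \<and> u < v \<and> v \<le> y \<and> \<alpha> u v \<noteq> 0}"
  have "{w. \<alpha> w y \<noteq> 0 \<and> x \<le> w} \<subseteq> insert y (fst ` ?S)"
  proof
    fix z assume z: "z \<in> {w. \<alpha> w y \<noteq> 0 \<and> x \<le> w}"
    then have "z \<le> y" using zoD[OF FI_zo[OF assms]] by blast
    show "z \<in> insert y (fst ` ?S)"
    proof (cases "z = y")
      case False
      then have "(z, y) \<in> ?S" using z \<open>z \<le> y\<close> by auto
      then show ?thesis by force
    qed simp
  qed
  then show ?thesis using FI_fin[OF assms True] finite_subset by blast
next
  case False
  have "{w. \<alpha> w y \<noteq> 0 \<and> x \<le> w} \<subseteq> {y}"
  proof
    fix z assume z: "z \<in> {w. \<alpha> w y \<noteq> 0 \<and> x \<le> w}"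
    then have "z \<le> y" "x \<le> z" using zoD[OF FI_zo[OF assms]] by auto
    then have "x \<le> y" by (rule order.trans[rotated])
    then have "x = y" using False by (simp add: order_less_le)
    then show "z \<in> {y}" using \<open>z \<le> y\<close> \<open>x \<le> z\<close> by simp
  qed
  then show ?thesis using finite_subset by blast
qed

lemma mult_eq:
  assumes a: "zo \<alpha>" and b: "zo \<beta>" and F: "finite F"
    and S: "{z. \<alpha> x z * \<beta> z w \<noteq> 0} \<subseteq> F"
  shows "fi_mult \<alpha> \<beta> x w = (\<Sum>z\<in>F. \<alpha> x z * \<beta> z w)"
proof (cases "x \<le> w")
  case True
  have "(\<Sum>z \<in> {z. x \<le> z \<and> z \<le> w \<and> \<alpha> x z * \<beta> z w \<noteq> 0}. \<alpha> x z * \<beta> z w)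
        = (\<Sum>z\<in>F. \<alpha> x z * \<beta> z w)"
  proof (rule sum.mono_neutral_left[OF F])
    show "{z. x \<le> z \<and> z \<le> w \<and> \<alpha> x z * \<beta> z w \<noteq> 0} \<subseteq> F" using S by blast
    show "\<forall>i\<in>F - {z. x \<le> z \<and> z \<le> w \<and> \<alpha> x z * \<beta> z w \<noteq> 0}. \<alpha> x i * \<beta> i w = 0"
    proof
      fix i assume i: "i \<in> F - {z. x \<le> z \<and> z \<le> w \<and> \<alpha> x z * \<beta> z w \<noteq> 0}"
      show "\<alpha> x i * \<beta> i w = 0"
      proof (rule ccontr)
        assume nz: "\<alpha> x i * \<beta> i w \<noteq> 0"
        then have "x \<le> i" "i \<le> w" using zoD[OF a, of x i] zoD[OF b, of i w] by auto
        then show False using i nz by blast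
      qed
    qed
  qed
  then show ?thesis using True by (simp add: fi_mult_def)
next
  case False
  have "\<forall>z\<in>F. \<alpha> x z * \<beta> z w = 0"
  proof
    fix z assume "z \<in> F"
    show "\<alpha> x z * \<beta> z w = 0"
    proof (rule ccontr)
      assume "\<alpha> x z * \<beta> z w \<noteq> 0"
      then have "x \<le> z" "z \<le> w" using zoD[OF a] zoD[OF b] by auto
      then show False using False by (meson order.trans)
    qed
  qed
  then have "(\<Sum>z\<in>F. \<alpha> x z * \<beta> z w) = 0" by (rule sum.neutral)
  moreover have "fi_mult \<alpha> \<beta> x w = 0" using False unfolding fi_mult_def by simp
  ultimately show ?thesis by simp
qed

lemma mult_zo: "zo (fi_mult \<alpha> \<beta>)"
  by (simp add: zo_def fi_mult_def)

lemma mult_closed: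
  assumes a: "\<alpha> \<in> FI" and b: "\<beta> \<in> FI" shows "fi_mult \<alpha> \<beta> \<in> FI"
proof -
  have "finitary (fi_mult \<alpha> \<beta>)"
    unfolding finitary_def
  proof (intro allI impI)
    fix x y :: 'a assume xy: "x < y"
    define Sa where "Sa = {(u, v). x \<le> u \<and> u < v \<and> v \<le> y \<and> \<alpha> u v \<noteq> 0}"
    define Sb where "Sb = {(u, v). x \<le> u \<and> u < v \<and> v \<le> y \<and> \<beta> u v \<noteq> 0}"
    have fa: "finite Sa" unfolding Sa_def using FI_fin[OF a xy] .
    have fb: "finite Sb" unfolding Sb_def using FI_fin[OF b xy] .
    have sub: "{(u, v). x \<le> u \<and> u < v \<and> v \<le> y \<and> fi_mult \<alpha> \<beta> u v \<noteq> 0}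
      \<subseteq> Sa \<union> Sb \<union> (\<lambda>(p, q). (fst p, snd q)) ` (Sa \<times> Sb)"
    proof
      fix p assume "p \<in> {(u, v). x \<le> u \<and> u < v \<and> v \<le> y \<and> fi_mult \<alpha> \<beta> u v \<noteq> 0}"
      then obtain u v where p: "p = (u, v)" and uv: "x \<le> u" "u < v" "v \<le> y"
        and nz: "fi_mult \<alpha> \<beta> u v \<noteq> 0" by blast
      have "u \<le> v" using uv by simp
      have "(\<Sum>z \<in> {z. u \<le> z \<and> z \<le> v \<and> \<alpha> u z * \<beta> z v \<noteq> 0}. \<alpha> u z * \<beta> z v) \<noteq> 0"
        using nz \<open>u \<le> v\<close> unfolding fi_mult_def by simp
      then obtain z where z: "u \<le> z" "z \<le> v" "\<alpha> u z \<noteq> 0" "\<beta> z v \<noteq> 0"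
        by (auto elim: sum.not_neutral_contains_not_neutral)
      show "p \<in> Sa \<union> Sb \<union> (\<lambda>(p, q). (fst p, snd q)) ` (Sa \<times> Sb)"
      proof (cases "z = u")
        case True
        then have "(u, v) \<in> Sb" using uv z unfolding Sb_def by simp
        then show ?thesis using p by simp
      next
        case False
        show ?thesis
        proof (cases "z = v")
          case True
          then have "(u, v) \<in> Sa" using uv z unfolding Sa_def by simp
          then show ?thesis using p by simp
        next
          case False2: False
          have "u < z" using z(1) False by (simp add: order_less_le)
          have "z \<le> y" using z(2) uv(3) by (rule order.trans)
          have "x \<le> z" using uv(1) z(1) by (rule order.trans)
          have "z < v" using z(2) False2 by (simp add: order_less_le)
          have "(u, z) \<in> Sa" using uv z \<open>u < z\<close> \<open>z \<le> y\<close> unfolding Sa_def by simp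
          moreover have "(z, v) \<in> Sb" using uv z \<open>z < v\<close> \<open>x \<le> z\<close> unfolding Sb_def by simp
          ultimately have "((u, z), (z, v)) \<in> Sa \<times> Sb" by simp
          then have "(\<lambda>(p, q). (fst p, snd q)) ((u, z), (z, v)) \<in> (\<lambda>(p, q). (fst p, snd q)) ` (Sa \<times> Sb)"
            by (rule imageI)
          then show ?thesis using p by simp
        qed
      qed
    qed
    show "finite {(u, v). x \<le> u \<and> u < v \<and> v \<le> y \<and> fi_mult \<alpha> \<beta> u v \<noteq> 0}"
      by (rule finite_subset[OF sub]) (intro finite_UnI finite_imageI finite_cartesian_product fa fb)
  qed
  moreover have "zo (fi_mult \<alpha> \<beta>)" by (rule mult_zo)
  ultimately show ?thesis unfolding FI_def zo_def by blast
qed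

lemma mult_assoc:
  assumes a: "\<alpha> \<in> FI" and b: "\<beta> \<in> FI" and c: "\<gamma> \<in> FI"
  shows "fi_mult (fi_mult \<alpha> \<beta>) \<gamma> = fi_mult \<alpha> (fi_mult \<beta> \<gamma>)"
proof (intro ext)
  fix x y
  define Z where "Z = {z. \<alpha> x z \<noteq> 0 \<and> z \<le> y}"
  define W where "W = {w. \<gamma> w y \<noteq> 0 \<and> x \<le> w}"
  have fZ: "finite Z" unfolding Z_def by (rule supp_fin1[OF a])
  have fW: "finite W" unfolding W_def by (rule supp_fin2[OF c])
  note za = FI_zo[OF a] and zb = FI_zo[OF b] and zc = FI_zo[OF c]
  have L: "fi_mult (fi_mult \<alpha> \<beta>) \<gamma> x y = (\<Sum>w\<in>W. (\<Sum>z\<in>Z. \<alpha> x z * \<beta> z w) * \<gamma> w y)"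
  proof -
    have "fi_mult (fi_mult \<alpha> \<beta>) \<gamma> x y = (\<Sum>w\<in>W. fi_mult \<alpha> \<beta> x w * \<gamma> w y)"
    proof (rule mult_eq[OF mult_zo zc fW], intro subsetI)
      fix w assume "w \<in> {w. fi_mult \<alpha> \<beta> x w * \<gamma> w y \<noteq> 0}"
      then have "fi_mult \<alpha> \<beta> x w \<noteq> 0" "\<gamma> w y \<noteq> 0" by auto
      then show "w \<in> W" unfolding W_def using zoD[OF mult_zo, of \<alpha> \<beta> x w] by blast
    qed
    also have "\<dots> = (\<Sum>w\<in>W. (\<Sum>z\<in>Z. \<alpha> x z * \<beta> z w) * \<gamma> w y)"
    proof (rule sum.cong[OF refl])
      fix w assume w: "w \<in> W"
      then have "w \<le> y" unfolding W_def using zoD[OF zc] by blast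
      have "fi_mult \<alpha> \<beta> x w = (\<Sum>z\<in>Z. \<alpha> x z * \<beta> z w)"
      proof (rule mult_eq[OF za zb fZ], intro subsetI)
        fix z assume "z \<in> {z. \<alpha> x z * \<beta> z w \<noteq> 0}"
        then have "\<alpha> x z \<noteq> 0" "\<beta> z w \<noteq> 0" by auto
        then have "z \<le> w" using zoD[OF zb] by blast
        then have "z \<le> y" using \<open>w \<le> y\<close> by (rule order.trans)
        then show "z \<in> Z" unfolding Z_def using \<open>\<alpha> x z \<noteq> 0\<close> by blast
      qed
      then show "fi_mult \<alpha> \<beta> x w * \<gamma> w y = (\<Sum>z\<in>Z. \<alpha> x z * \<beta> z w) * \<gamma> w y" by simp
    qed
    finally show ?thesis .
  qed
  have R: "fi_mult \<alpha> (fi_mult \<beta> \<gamma>) x y = (\<Sum>z\<in>Z. \<alpha> x z * (\<Sum>w\<in>W. \<beta> z w * \<gamma> w y))"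
  proof -
    have "fi_mult \<alpha> (fi_mult \<beta> \<gamma>) x y = (\<Sum>z\<in>Z. \<alpha> x z * fi_mult \<beta> \<gamma> z y)"
    proof (rule mult_eq[OF za mult_zo fZ], intro subsetI)
      fix z assume "z \<in> {z. \<alpha> x z * fi_mult \<beta> \<gamma> z y \<noteq> 0}"
      then have "\<alpha> x z \<noteq> 0" "fi_mult \<beta> \<gamma> z y \<noteq> 0" by auto
      then show "z \<in> Z" unfolding Z_def using zoD[OF mult_zo, of \<beta> \<gamma> z y] by blast
    qed
    also have "\<dots> = (\<Sum>z\<in>Z. \<alpha> x z * (\<Sum>w\<in>W. \<beta> z w * \<gamma> w y))"
    proof (rule sum.cong[OF refl])
      fix z assume z: "z \<in> Z"
      then have "x \<le> z" unfolding Z_def using zoD[OF za] by blast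
      have "fi_mult \<beta> \<gamma> z y = (\<Sum>w\<in>W. \<beta> z w * \<gamma> w y)"
      proof (rule mult_eq[OF zb zc fW], intro subsetI)
        fix w assume "w \<in> {w. \<beta> z w * \<gamma> w y \<noteq> 0}"
        then have "\<beta> z w \<noteq> 0" "\<gamma> w y \<noteq> 0" by auto
        then have "z \<le> w" using zoD[OF zb] by blast
        then have "x \<le> w" using \<open>x \<le> z\<close> by (rule order.trans[rotated])
        then show "w \<in> W" unfolding W_def using \<open>\<gamma> w y \<noteq> 0\<close> by blast
      qed
      then show "\<alpha> x z * fi_mult \<beta> \<gamma> z y = \<alpha> x z * (\<Sum>w\<in>W. \<beta> z w * \<gamma> w y)" by simp
    qed
    finally show ?thesis .
  qed
  show "fi_mult (fi_mult \<alpha> \<beta>) \<gamma> x y = fi_mult \<alpha> (fi_mult \<beta> \<gamma>) x y"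
  proof -
    have "(\<Sum>w\<in>W. (\<Sum>z\<in>Z. \<alpha> x z * \<beta> z w) * \<gamma> w y) = (\<Sum>w\<in>W. \<Sum>z\<in>Z. \<alpha> x z * \<beta> z w * \<gamma> w y)"
      by (simp only: sum_distrib_right)
    also have "\<dots> = (\<Sum>z\<in>Z. \<Sum>w\<in>W. \<alpha> x z * \<beta> z w * \<gamma> w y)"
      by (rule sum.swap)
    also have "\<dots> = (\<Sum>z\<in>Z. \<alpha> x z * (\<Sum>w\<in>W. \<beta> z w * \<gamma> w y))"
      by (simp only: sum_distrib_left mult.assoc)
    finally show ?thesis using L R by simp
  qed
qed

definition E :: "'a::order \<Rightarrow> 'a \<Rightarrow> 'a \<Rightarrow> 'k::field" where
  "E x = (\<lambda>u v. if u = x \<and> v = x then 1 else 0)"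

lemma E_zo: "zo (E x)" by (simp add: zo_def E_def)

lemma E_in: "E x \<in> FI"
  unfolding FI_def finitary_def E_def by (auto intro!: finite_subset[where B="{(x,x)}"])

lemma E_left: assumes "zo \<alpha>"
  shows "fi_mult (E x) \<alpha> = (\<lambda>u v. if u = x then \<alpha> x v else 0)"
proof (intro ext)
  fix u v
  have "fi_mult (E x) \<alpha> u v = (\<Sum>z\<in>{x}. E x u z * \<alpha> z v)"
    by (rule mult_eq[OF E_zo assms]) (auto simp: E_def split: if_splits)
  then show "fi_mult (E x) \<alpha> u v = (if u = x then \<alpha> x v else 0)" by (simp add: E_def)
qed

lemma E_right: assumes "zo \<alpha>"
  shows "fi_mult \<alpha> (E x) = (\<lambda>u v. if v = x then \<alpha> u x else 0)"
proof (intro ext)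
  fix u v
  have "fi_mult \<alpha> (E x) u v = (\<Sum>z\<in>{x}. \<alpha> u z * E x z v)"
    by (rule mult_eq[OF assms E_zo]) (auto simp: E_def split: if_splits)
  then show "fi_mult \<alpha> (E x) u v = (if v = x then \<alpha> u x else 0)" by (simp add: E_def)
qed

lemma zero_in: "(\<lambda>_ _. 0) \<in> FI"
  by (simp add: FI_def finitary_def)

lemma zero_left: "fi_mult (\<lambda>_ _. 0) \<alpha> = (\<lambda>_ _. 0)"
  unfolding fi_mult_def by (rule ext)+ simp

lemma zero_right: "fi_mult \<alpha> (\<lambda>_ _. 0) = (\<lambda>_ _. 0)"
  unfolding fi_mult_def by (rule ext)+ simp

lemma diag_sq: assumes "zo \<alpha>" shows "fi_mult \<alpha> \<alpha> x x = \<alpha> x x * \<alpha> x x"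
proof -
  have "fi_mult \<alpha> \<alpha> x x = (\<Sum>z\<in>{x}. \<alpha> x z * \<alpha> z x)"
    by (rule mult_eq[OF assms assms]) (auto dest: zoD[OF assms] intro: antisym)
  then show ?thesis by simp
qed

locale alg =
  fixes A :: "'r set" and m :: "'r \<Rightarrow> 'r \<Rightarrow> 'r" and z :: 'r
  assumes cl: "a \<in> A \<Longrightarrow> b \<in> A \<Longrightarrow> m a b \<in> A"
    and assoc: "a \<in> A \<Longrightarrow> b \<in> A \<Longrightarrow> c \<in> A \<Longrightarrow> m (m a b) c = m a (m b c)"
    and zA: "z \<in> A" and zl: "m z a = z" and zr: "m a z = z"
begin

definition prim where
  "prim e \<longleftrightarrow> e \<in> A \<and> m e e = e \<and> e \<noteq> z \<and>
     (\<forall>g\<in>A. m g g = g \<and> m e g = g \<and> m g e = g \<longrightarrow> g = z \<or> g = e)"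

definition eqv where
  "eqv e e' \<longleftrightarrow> (\<exists>a\<in>A. \<exists>b\<in>A. m a b = e \<and> m b a = e' \<and> m e a = a \<and> m a e' = a \<and> m e' b = b \<and> m b e = b)"

definition rel where
  "rel e e' \<longleftrightarrow> (\<exists>\<beta>\<in>A. m e \<beta> = \<beta> \<and> m \<beta> e' = \<beta> \<and> \<beta> \<noteq> z)"

lemma eqv_sym: "eqv e e' \<Longrightarrow> eqv e' e"
  unfolding eqv_def by blast

lemma eqv_trans:
  assumes "eqv e e'" "eqv e' e''" shows "eqv e e''"
proof -
  obtain a b where ab: "a \<in> A" "b \<in> A" "m a b = e" "m b a = e'" "m e a = a" "m a e' = a" "m e' b = b" "m b e = b"
    using assms(1) unfolding eqv_def by blast
  obtain c d where cd: "c \<in> A" "d \<in> A" "m c d = e'" "m d c = e''" "m e' c = c" "m c e'' = c" "m e'' d = d" "m d e' = d"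
    using assms(2) unfolding eqv_def by blast
  have eA: "e \<in> A" "e' \<in> A" "e'' \<in> A" using ab cd cl by metis+
  have acA: "m a c \<in> A" and dbA: "m d b \<in> A" using ab cd cl by auto
  have 1: "m (m a c) (m d b) = e"
  proof -
    have "m (m a c) (m d b) = m a (m c (m d b))" by (rule assoc[OF ab(1) cd(1) dbA])
    also have "m c (m d b) = m (m c d) b" by (rule assoc[OF cd(1) cd(2) ab(2), symmetric])
    finally show ?thesis using ab cd by simp
  qed
  have 2: "m (m d b) (m a c) = e''"
  proof -
    have "m (m d b) (m a c) = m d (m b (m a c))" by (rule assoc[OF cd(2) ab(2) acA])
    also have "m b (m a c) = m (m b a) c" by (rule assoc[OF ab(2) ab(1) cd(1), symmetric])
    finally show ?thesis using ab cd by simp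
  qed
  have 3: "m e (m a c) = m a c" using assoc[OF eA(1) ab(1) cd(1), symmetric] ab by simp
  have 4: "m (m a c) e'' = m a c" using assoc[OF ab(1) cd(1) eA(3)] cd by simp
  have 5: "m e'' (m d b) = m d b" using assoc[OF eA(3) cd(2) ab(2), symmetric] cd by simp
  have 6: "m (m d b) e = m d b" using assoc[OF cd(2) ab(2) eA(1)] ab by simp
  show ?thesis unfolding eqv_def using 1 2 3 4 5 6 acA dbA by blast
qed

lemma rel_left:
  assumes "eqv e e1" "rel e e'" "e' \<in> A" shows "rel e1 e'"
proof -
  obtain a b where ab: "a \<in> A" "b \<in> A" "m a b = e" "m b a = e1" "m e a = a" "m a e1 = a" "m e1 b = b" "m b e = b"
    using assms(1) unfolding eqv_def by blast
  obtain \<beta> where b: "\<beta> \<in> A" "m e \<beta> = \<beta>" "m \<beta> e' = \<beta>" "\<beta> \<noteq> z"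
    using assms(2) unfolding rel_def by blast
  have e1A: "e1 \<in> A" using ab cl by metis
  have 1: "m e1 (m b \<beta>) = m b \<beta>" using assoc[OF e1A ab(2) b(1), symmetric] ab by simp
  have 2: "m (m b \<beta>) e' = m b \<beta>" using assoc[OF ab(2) b(1) assms(3)] b by simp
  have 3: "m a (m b \<beta>) = \<beta>" using assoc[OF ab(1) ab(2) b(1), symmetric] ab b by simp
  have 4: "m b \<beta> \<noteq> z"
  proof
    assume "m b \<beta> = z" then have "m a (m b \<beta>) = z" using zr by simp
    then show False using 3 b(4) by simp
  qed
  have "m b \<beta> \<in> A" using ab b cl by auto
  then show ?thesis unfolding rel_def using 1 2 4 by blast
qed

lemma rel_right:
  assumes "eqv e' e2" "rel e e'" "e \<in> A" shows "rel e e2"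
proof -
  obtain c d where cd: "c \<in> A" "d \<in> A" "m c d = e'" "m d c = e2" "m e' c = c" "m c e2 = c" "m e2 d = d" "m d e' = d"
    using assms(1) unfolding eqv_def by blast
  obtain \<beta> where b: "\<beta> \<in> A" "m e \<beta> = \<beta>" "m \<beta> e' = \<beta>" "\<beta> \<noteq> z"
    using assms(2) unfolding rel_def by blast
  have e2A: "e2 \<in> A" using cd cl by metis
  have 1: "m e (m \<beta> c) = m \<beta> c" using assoc[OF assms(3) b(1) cd(1), symmetric] b by simp
  have 2: "m (m \<beta> c) e2 = m \<beta> c" using assoc[OF b(1) cd(1) e2A] cd by simp
  have 3: "m (m \<beta> c) d = \<beta>" using assoc[OF b(1) cd(1) cd(2)] cd b by simp
  have 4: "m \<beta> c \<noteq> z"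
  proof
    assume "m \<beta> c = z" then have "m (m \<beta> c) d = z" using zl by simp
    then show False using 3 b(4) by simp
  qed
  have "m \<beta> c \<in> A" using cd b cl by auto
  then show ?thesis unfolding rel_def using 1 2 4 by blast
qed

lemma eqv_rel: assumes "eqv e e'" "e \<noteq> z" shows "rel e e'"
proof -
  obtain a b where ab: "a \<in> A" "b \<in> A" "m a b = e" "m b a = e'" "m e a = a" "m a e' = a" "m e' b = b" "m b e = b"
    using assms(1) unfolding eqv_def by blast
  have "a \<noteq> z"
  proof
    assume "a = z" then have "m a b = z" using zl by simp
    then show False using ab(3) assms(2) by simp
  qed
  then show ?thesis unfolding rel_def using ab by blast
qed

lemma prim_eqv:
  assumes pe: "prim e" and p: "p \<in> A" "m p p = p" "m (m p e) p = p" "p \<noteq> z"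
  shows "eqv e p"
proof -
  have e: "e \<in> A" "m e e = e" using pe unfolding prim_def by auto
  define a where "a = m e p"
  define b where "b = m p e"
  have aA: "a \<in> A" "b \<in> A" unfolding a_def b_def using e p cl by auto
  have ba: "m b a = p"
  proof -
    have "m b a = m (m b e) p" unfolding a_def using assoc[OF aA(2) e(1) p(1), symmetric] .
    also have "m b e = b" unfolding b_def using assoc[OF p(1) e(1) e(1)] e by simp
    finally show ?thesis unfolding b_def using p by simp
  qed
  define g where "g = m a b"
  have gA: "g \<in> A" unfolding g_def using aA cl by auto
  have gg: "m g g = g"
  proof -
    have "m g g = m (m (m a b) a) b" unfolding g_def using assoc[OF cl[OF aA] aA, symmetric] .
    also have "m (m a b) a = m a (m b a)" using assoc[OF aA(1) aA(2) aA(1)] .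
    finally show ?thesis unfolding g_def ba using assoc[OF aA(1) p(1) aA(2), symmetric]
      assoc[OF e(1) p(1) p(1)] p(2) unfolding a_def by simp
  qed
  have ea: "m e a = a" unfolding a_def using assoc[OF e(1) e(1) p(1), symmetric] e by simp
  have ap: "m a p = a" unfolding a_def using assoc[OF e(1) p(1) p(1)] p by simp
  have pb: "m p b = b" unfolding b_def using assoc[OF p(1) p(1) e(1), symmetric] p by simp
  have be: "m b e = b" unfolding b_def using assoc[OF p(1) e(1) e(1)] e by simp
  have eg: "m e g = g" unfolding g_def using assoc[OF e(1) aA(1) aA(2), symmetric] ea by simp
  have ge: "m g e = g" unfolding g_def using assoc[OF aA(1) aA(2) e(1)] be by simp
  have bga: "m (m b g) a = p"
  proof -
    have "m (m b g) a = m b (m g a)" using assoc[OF aA(2) gA aA(1)] .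
    also have "m g a = m a (m b a)" unfolding g_def using assoc[OF aA(1) aA(2) aA(1)] .
    also have "\<dots> = a" using ba ap by simp
    finally show ?thesis using ba by simp
  qed
  have "g \<noteq> z"
  proof
    assume "g = z" then have "m (m b g) a = z" using zl zr by simp
    then show False using bga p(4) by simp
  qed
  then have "g = e" using pe gA gg eg ge unfolding prim_def by blast
  then have ab: "m a b = e" unfolding g_def .
  show ?thesis unfolding eqv_def using aA ab ba ea ap pb be by blast
qed

end

locale alg_iso = A: alg A m z + B: alg B m' z'
  for A :: "'r set" and m z and B :: "'s set" and m' z' +
  fixes h :: "'r \<Rightarrow> 's"
  assumes hbij: "bij_betw h A B"
    and hm: "a \<in> A \<Longrightarrow> b \<in> A \<Longrightarrow> h (m a b) = m' (h a) (h b)"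
    and hz: "h z = z'"
begin

lemma hA: "a \<in> A \<Longrightarrow> h a \<in> B" using hbij bij_betwE by blast

lemma hsurj: "\<beta> \<in> B \<Longrightarrow> \<exists>\<alpha>\<in>A. \<beta> = h \<alpha>"
  using hbij unfolding bij_betw_def by blast

lemma hinj: "a \<in> A \<Longrightarrow> b \<in> A \<Longrightarrow> h a = h b \<longleftrightarrow> a = b"
  using hbij unfolding bij_betw_def inj_on_def by blast

lemma hz_iff: "a \<in> A \<Longrightarrow> h a = z' \<longleftrightarrow> a = z"
  using hinj[OF _ A.zA, of a] hz by simp

lemma hmul_eq: "a \<in> A \<Longrightarrow> b \<in> A \<Longrightarrow> c \<in> A \<Longrightarrow> m' (h a) (h b) = h c \<longleftrightarrow> m a b = c"
proof -
  assume abc: "a \<in> A" "b \<in> A" "c \<in> A"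
  have "m' (h a) (h b) = h (m a b)" using hm[OF abc(1,2)] by simp
  then show ?thesis using hinj[OF A.cl[OF abc(1,2)] abc(3)] by simp
qed

lemma prim_iff: assumes e: "e \<in> A" shows "B.prim (h e) \<longleftrightarrow> A.prim e"
proof
  assume P: "B.prim (h e)"
  show "A.prim e" unfolding A.prim_def
  proof (intro conjI ballI impI)
    show "e \<in> A" by (rule e)
    have "m' (h e) (h e) = h e" using P unfolding B.prim_def by blast
    then show "m e e = e" using hmul_eq[OF e e e] by simp
    have "h e \<noteq> z'" using P unfolding B.prim_def by blast
    then show "e \<noteq> z" using hz_iff[OF e] by simp
  next
    fix g assume g: "g \<in> A" and H: "m g g = g \<and> m e g = g \<and> m g e = g"
    have "m' (h g) (h g) = h g" "m' (h e) (h g) = h g" "m' (h g) (h e) = h g"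
      using H hmul_eq[OF g g g] hmul_eq[OF e g g] hmul_eq[OF g e g] by simp_all
    then have "h g = z' \<or> h g = h e" using P hA[OF g] unfolding B.prim_def by blast
    then show "g = z \<or> g = e" using hz_iff[OF g] hinj[OF g e] by blast
  qed
next
  assume P: "A.prim e"
  show "B.prim (h e)" unfolding B.prim_def
  proof (intro conjI ballI impI)
    show "h e \<in> B" using hA e .
    have "m e e = e" using P unfolding A.prim_def by blast
    then show "m' (h e) (h e) = h e" using hmul_eq[OF e e e] by simp
    have "e \<noteq> z" using P unfolding A.prim_def by blast
    then show "h e \<noteq> z'" using hz_iff[OF e] by simp
  next
    fix g' assume g': "g' \<in> B" and H: "m' g' g' = g' \<and> m' (h e) g' = g' \<and> m' g' (h e) = g'"
    obtain g where g: "g \<in> A" "g' = h g" using hsurj[OF g'] by blast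
    have "m g g = g \<and> m e g = g \<and> m g e = g"
      using H hmul_eq[OF g(1) g(1) g(1)] hmul_eq[OF e g(1) g(1)] hmul_eq[OF g(1) e g(1)]
      unfolding g(2) by simp
    then have "g = z \<or> g = e" using P g(1) unfolding A.prim_def by blast
    then show "g' = z' \<or> g' = h e" using g hz by blast
  qed
qed

lemma eqv_to: assumes "A.eqv e e'" shows "B.eqv (h e) (h e')"
proof -
  obtain a b where ab: "a \<in> A" "b \<in> A" "m a b = e" "m b a = e'" "m e a = a" "m a e' = a" "m e' b = b" "m b e = b"
    using assms unfolding A.eqv_def by blast
  have eA: "e \<in> A" "e' \<in> A" using ab A.cl by auto
  have "m' (h a) (h b) = h e" "m' (h b) (h a) = h e'" "m' (h e) (h a) = h a" "m' (h a) (h e') = h a"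
    "m' (h e') (h b) = h b" "m' (h b) (h e) = h b"
    using ab hmul_eq[OF ab(1) ab(2) eA(1)] hmul_eq[OF ab(2) ab(1) eA(2)] hmul_eq[OF eA(1) ab(1) ab(1)]
      hmul_eq[OF ab(1) eA(2) ab(1)] hmul_eq[OF eA(2) ab(2) ab(2)] hmul_eq[OF ab(2) eA(1) ab(2)]
    by simp_all
  moreover have "h a \<in> B" "h b \<in> B" using ab hA by auto
  ultimately show ?thesis unfolding B.eqv_def by blast
qed

lemma rel_iff: assumes e: "e \<in> A" "e' \<in> A" shows "B.rel (h e) (h e') \<longleftrightarrow> A.rel e e'"
proof
  assume "B.rel (h e) (h e')"
  then obtain \<beta>' where b': "\<beta>' \<in> B" "m' (h e) \<beta>' = \<beta>'" "m' \<beta>' (h e') = \<beta>'" "\<beta>' \<noteq> z'"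
    unfolding B.rel_def by blast
  obtain \<beta> where b: "\<beta> \<in> A" "\<beta>' = h \<beta>" using hsurj b'(1) by blast
  have "m e \<beta> = \<beta>" "m \<beta> e' = \<beta>" "\<beta> \<noteq> z"
    using b' hmul_eq[OF e(1) b(1) b(1)] hmul_eq[OF b(1) e(2) b(1)] hz_iff[OF b(1)]
    unfolding b(2) by simp_all
  then show "A.rel e e'" unfolding A.rel_def using b by blast
next
  assume "A.rel e e'"
  then obtain \<beta> where b: "\<beta> \<in> A" "m e \<beta> = \<beta>" "m \<beta> e' = \<beta>" "\<beta> \<noteq> z"
    unfolding A.rel_def by blast
  have "m' (h e) (h \<beta>) = h \<beta>" "m' (h \<beta>) (h e') = h \<beta>" "h \<beta> \<noteq> z'"
    using b hmul_eq[OF e(1) b(1) b(1)] hmul_eq[OF b(1) e(2) b(1)] hz_iff[OF b(1)] by simp_all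
  then show "B.rel (h e) (h e')" unfolding B.rel_def using hA b by blast
qed

end

lemma alg_FI: "alg (FI :: ('a::order \<Rightarrow> 'a \<Rightarrow> 'k::field) set) fi_mult (\<lambda>_ _. 0)"
  by unfold_locales (auto simp: mult_closed mult_assoc zero_in zero_left zero_right)

lemma E_idem: "fi_mult (E x) (E x) = E x"
  unfolding E_left[OF E_zo] by (rule ext)+ (simp add: E_def)

lemma E_nz: "E x \<noteq> (\<lambda>_ _. 0)"
  by (metis E_def one_neq_zero)

lemma prim_E: "alg.prim FI fi_mult (\<lambda>_ _. 0) (E x)"
  unfolding alg.prim_def[OF alg_FI]
proof (intro conjI ballI impI)
  show "E x \<in> FI" by (rule E_in)
  show "fi_mult (E x) (E x) = E x" by (rule E_idem)
  show "E x \<noteq> (\<lambda>_ _. 0)" by (rule E_nz)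
next
  fix g assume g: "g \<in> FI" and H: "fi_mult g g = g \<and> fi_mult (E x) g = g \<and> fi_mult g (E x) = g"
  have zg: "zo g" using FI_zo[OF g] .
  have H1: "fi_mult (E x) g = g" and H2: "fi_mult g (E x) = g" using H by auto
  have 1: "g u v = (if u = x then g x v else 0)" for u v
    using fun_cong[OF fun_cong[OF trans[OF H1[symmetric] E_left[OF zg, of x]]], of u v] by simp
  have 2: "g u v = (if v = x then g u x else 0)" for u v
    using fun_cong[OF fun_cong[OF trans[OF H2[symmetric] E_right[OF zg, of x]]], of u v] by simp
  have geq: "g = (\<lambda>u v. g x x * E x u v)"
  proof (intro ext)
    fix u v show "g u v = g x x * E x u v"
      using 1[of u v] 2[of u v] 2[of x v] by (auto simp: E_def)
  qed
  have "g x x = g x x * g x x" using diag_sq[OF zg, of x] H by simp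
  then have "g x x = 0 \<or> g x x = 1"
    by (metis mult_cancel_left1 mult_zero_left)
  then show "g = (\<lambda>_ _. 0) \<or> g = E x"
  proof
    assume "g x x = 0" then show ?thesis using geq by simp
  next
    assume "g x x = 1" then have "g = (\<lambda>u v. E x u v)" using geq by simp
    then show ?thesis by simp
  qed
qed

lemma idem_diag:
  assumes e: "\<epsilon> \<in> FI" and idem: "fi_mult \<epsilon> \<epsilon> = \<epsilon>" and nz: "\<epsilon> \<noteq> (\<lambda>_ _. 0)"
  shows "\<exists>x. \<epsilon> x x \<noteq> 0"
proof (rule ccontr)
  assume "\<not> (\<exists>x. \<epsilon> x x \<noteq> 0)"
  then have H: "\<And>x. \<epsilon> x x = 0" by blast
  have ze: "zo \<epsilon>" using FI_zo[OF e] .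
  obtain x0 y0 where "\<epsilon> x0 y0 \<noteq> 0" using nz by (meson ext)
  then have P0: "\<epsilon> (fst (x0, y0)) (snd (x0, y0)) \<noteq> 0" by simp
  define N where "N = (\<lambda>p. card {(s, t). fst p \<le> s \<and> s < t \<and> t \<le> snd p \<and> \<epsilon> s t \<noteq> 0})"
  obtain p where p: "\<epsilon> (fst p) (snd p) \<noteq> 0"
    and pmin: "\<And>q. \<epsilon> (fst q) (snd q) \<noteq> 0 \<Longrightarrow> N p \<le> N q"
    using ex_has_least_nat[of "\<lambda>p. \<epsilon> (fst p) (snd p) \<noteq> 0", OF P0, of N] by blast
  obtain u v where uv: "p = (u, v)" by (cases p)
  have euv: "\<epsilon> u v \<noteq> 0" using p uv by simp
  have "u \<le> v" using zoD[OF ze euv] .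
  moreover have "u \<noteq> v" using euv H by auto
  ultimately have "u < v" by (simp add: order_less_le)
  have empty: "{z. u \<le> z \<and> z \<le> v \<and> \<epsilon> u z * \<epsilon> z v \<noteq> 0} = {}"
  proof (rule ccontr)
    assume "{z. u \<le> z \<and> z \<le> v \<and> \<epsilon> u z * \<epsilon> z v \<noteq> 0} \<noteq> {}"
    then obtain w where w: "u \<le> w" "w \<le> v" "\<epsilon> u w \<noteq> 0" "\<epsilon> w v \<noteq> 0" by auto
    have "w \<noteq> u" using w H by auto
    have "w \<noteq> v" using w H by auto
    have "u < w" using w(1) \<open>w \<noteq> u\<close> by (simp add: order_less_le)
    let ?S1 = "{(s, t). u \<le> s \<and> s < t \<and> t \<le> w \<and> \<epsilon> s t \<noteq> 0}"
    let ?S2 = "{(s, t). u \<le> s \<and> s < t \<and> t \<le> v \<and> \<epsilon> s t \<noteq> 0}"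
    have fin: "finite ?S2" using FI_fin[OF e \<open>u < v\<close>] .
    have sub: "?S1 \<subseteq> ?S2" using w(2) by (auto intro: order.trans)
    have "(u, v) \<in> ?S2" using \<open>u < v\<close> euv by simp
    moreover have "(u, v) \<notin> ?S1" using w(2) \<open>w \<noteq> v\<close> by (auto dest: antisym)
    ultimately have "?S1 \<subset> ?S2" using sub by blast
    with fin have "card ?S1 < card ?S2" by (rule psubset_card_mono)
    moreover have "N p \<le> N (u, w)" using pmin[of "(u, w)"] w by simp
    ultimately show False unfolding N_def uv by simp
  qed
  have "\<epsilon> u v = fi_mult \<epsilon> \<epsilon> u v" using idem by simp
  also have "\<dots> = (\<Sum>z \<in> {z. u \<le> z \<and> z \<le> v \<and> \<epsilon> u z * \<epsilon> z v \<noteq> 0}. \<epsilon> u z * \<epsilon> z v)"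
    unfolding fi_mult_def using \<open>u \<le> v\<close> by (simp only: if_True)
  also have "\<dots> = 0" unfolding empty by (rule sum.empty)
  finally show False using euv by simp
qed

lemma prim_eqv_E:
  assumes P: "alg.prim FI fi_mult (\<lambda>_ _. 0) \<epsilon>"
  shows "\<exists>x. alg.eqv FI fi_mult \<epsilon> (E x)"
proof -
  have e: "\<epsilon> \<in> FI" "fi_mult \<epsilon> \<epsilon> = \<epsilon>" "\<epsilon> \<noteq> (\<lambda>_ _. 0)"
    using P unfolding alg.prim_def[OF alg_FI] by auto
  obtain x where x: "\<epsilon> x x \<noteq> 0" using idem_diag[OF e] by blast
  have "\<epsilon> x x = \<epsilon> x x * \<epsilon> x x" using diag_sq[OF FI_zo[OF e(1)], of x] e(2) by simp
  then have x1: "\<epsilon> x x = 1" using x by (metis mult_cancel_left1)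
  have ze: "zo \<epsilon>" using FI_zo[OF e(1)] .
  have "fi_mult (fi_mult (E x) \<epsilon>) (E x) = E x"
    unfolding E_right[OF mult_zo[of "E x" \<epsilon>]] unfolding E_left[OF ze]
    using x1 by (intro ext) (simp add: E_def)
  then show ?thesis
    using alg.prim_eqv[OF alg_FI P E_in E_idem _ E_nz] by blast
qed

lemma rel_E: "alg.rel FI fi_mult (\<lambda>_ _. 0) (E x :: 'a::order \<Rightarrow> 'a \<Rightarrow> 'k::field) (E y) \<longleftrightarrow> x \<le> y"
proof
  assume "alg.rel FI fi_mult (\<lambda>_ _. 0) (E x :: 'a::order \<Rightarrow> 'a \<Rightarrow> 'k::field) (E y)"
  then obtain \<beta> :: "'a \<Rightarrow> 'a \<Rightarrow> 'k" where b: "\<beta> \<in> FI" "fi_mult (E x) \<beta> = \<beta>" "fi_mult \<beta> (E y) = \<beta>" "\<beta> \<noteq> (\<lambda>_ _. 0)"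
    unfolding alg.rel_def[OF alg_FI] by blast
  have zb: "zo \<beta>" using FI_zo[OF b(1)] .
  have 1: "\<beta> u v = (if u = x then \<beta> x v else 0)" for u v
    using fun_cong[OF fun_cong[OF trans[OF b(2)[symmetric] E_left[OF zb, of x]]], of u v] by simp
  have 2: "\<beta> u v = (if v = y then \<beta> u y else 0)" for u v
    using fun_cong[OF fun_cong[OF trans[OF b(3)[symmetric] E_right[OF zb, of y]]], of u v] by simp
  have "\<beta> x y \<noteq> 0"
  proof
    assume "\<beta> x y = 0"
    then have "\<beta> = (\<lambda>_ _. 0)" using 1 2 by (metis ext)
    then show False using b(4) by simp
  qed
  then show "x \<le> y" using zoD[OF zb] by blast
next
  assume xy: "x \<le> y"
  define \<beta> :: "'a \<Rightarrow> 'a \<Rightarrow> 'k" where "\<beta> = (\<lambda>u v. if u = x \<and> v = y then 1 else 0)"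
  have zb: "zo \<beta>" unfolding zo_def \<beta>_def using xy by auto
  have bF: "\<beta> \<in> FI" unfolding FI_def finitary_def \<beta>_def using xy
    by (auto intro!: finite_subset[where B="{(x,y)}"])
  have "fi_mult (E x) \<beta> = \<beta>" unfolding E_left[OF zb] by (intro ext) (simp add: \<beta>_def)
  moreover have "fi_mult \<beta> (E y) = \<beta>" unfolding E_right[OF zb] by (intro ext) (simp add: \<beta>_def)
  moreover have "\<beta> \<noteq> (\<lambda>_ _. 0)" unfolding \<beta>_def by (metis one_neq_zero)
  ultimately show "alg.rel FI fi_mult (\<lambda>_ _. 0) (E x :: 'a \<Rightarrow> 'a \<Rightarrow> 'k) (E y)"
    unfolding alg.rel_def[OF alg_FI] using bF by blast
qed

lemma eqv_E: "alg.eqv FI fi_mult (E x) (E y :: 'a::order \<Rightarrow> 'a \<Rightarrow> 'k::field) \<Longrightarrow> x = y"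
proof -
  assume H: "alg.eqv FI fi_mult (E x) (E y :: 'a::order \<Rightarrow> 'a \<Rightarrow> 'k::field)"
  have "alg.rel FI fi_mult (\<lambda>_ _. 0) (E x) (E y :: 'a \<Rightarrow> 'a \<Rightarrow> 'k)"
    by (rule alg.eqv_rel[OF alg_FI H E_nz])
  moreover have "alg.rel FI fi_mult (\<lambda>_ _. 0) (E y) (E x :: 'a \<Rightarrow> 'a \<Rightarrow> 'k)"
    by (rule alg.eqv_rel[OF alg_FI alg.eqv_sym[OF alg_FI H] E_nz])
  ultimately show "x = y" unfolding rel_E by (rule antisym)
qed



theorem theorem5:
  fixes \<phi> :: "('a::order \<Rightarrow> 'a \<Rightarrow> 'k::field) \<Rightarrow> ('b::order \<Rightarrow> 'b \<Rightarrow> 'k)"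
  assumes "fi_alg_iso \<phi>"
  shows "\<exists>f :: 'a \<Rightarrow> 'b. poset_iso f"
proof -
  have bij: "bij_betw \<phi> FI FI" and hm: "\<And>a b. a \<in> FI \<Longrightarrow> b \<in> FI \<Longrightarrow> \<phi> (fi_mult a b) = fi_mult (\<phi> a) (\<phi> b)"
    and hs: "\<And>c a. a \<in> FI \<Longrightarrow> \<phi> (fi_smult c a) = fi_smult c (\<phi> a)"
    using assms unfolding fi_alg_iso_def by blast+
  have "\<phi> (fi_smult 0 (\<lambda>_ _. 0)) = fi_smult 0 (\<phi> (\<lambda>_ _. 0))" using hs[OF zero_in] .
  then have hz: "\<phi> (\<lambda>_ _. 0) = (\<lambda>_ _. 0)" by (simp add: fi_smult_def)
  interpret I: alg_iso "FI::('a \<Rightarrow> 'a \<Rightarrow> 'k) set" fi_mult "\<lambda>_ _. 0" "FI::('b \<Rightarrow> 'b \<Rightarrow> 'k) set" fi_mult "\<lambda>_ _. 0" \<phi>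
    by (intro alg_iso.intro alg_FI alg_iso_axioms.intro bij hm hz)
  define f where "f x = (SOME y. alg.eqv FI fi_mult (\<phi> (E x)) (E y :: 'b \<Rightarrow> 'b \<Rightarrow> 'k))" for x
  have fx: "alg.eqv FI fi_mult (\<phi> (E x)) (E (f x) :: 'b \<Rightarrow> 'b \<Rightarrow> 'k)" for x
  proof -
    have "alg.prim FI fi_mult (\<lambda>_ _. 0) (\<phi> (E x))"
      using I.prim_iff[OF E_in] prim_E by blast
    then have "\<exists>y. alg.eqv FI fi_mult (\<phi> (E x)) (E y :: 'b \<Rightarrow> 'b \<Rightarrow> 'k)" by (rule prim_eqv_E)
    then show ?thesis unfolding f_def by (rule someI_ex)
  qed
  have ord: "x \<le> y \<longleftrightarrow> f x \<le> f y" for x y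
  proof -
    have "x \<le> y \<longleftrightarrow> alg.rel FI fi_mult (\<lambda>_ _. 0) (\<phi> (E x)) (\<phi> (E y))"
      using rel_E I.rel_iff[OF E_in E_in] by blast
    also have "\<dots> \<longleftrightarrow> alg.rel FI fi_mult (\<lambda>_ _. 0) (E (f x)) (E (f y) :: 'b \<Rightarrow> 'b \<Rightarrow> 'k)"
    proof
      assume "alg.rel FI fi_mult (\<lambda>_ _. 0) (\<phi> (E x)) (\<phi> (E y))"
      then have "alg.rel FI fi_mult (\<lambda>_ _. 0) (E (f x) :: 'b \<Rightarrow> 'b \<Rightarrow> 'k) (\<phi> (E y))"
        by (rule I.B.rel_left[OF fx _ I.hA[OF E_in]])
      then show "alg.rel FI fi_mult (\<lambda>_ _. 0) (E (f x)) (E (f y) :: 'b \<Rightarrow> 'b \<Rightarrow> 'k)"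
        by (rule I.B.rel_right[OF fx _ E_in])
    next
      assume "alg.rel FI fi_mult (\<lambda>_ _. 0) (E (f x)) (E (f y) :: 'b \<Rightarrow> 'b \<Rightarrow> 'k)"
      then have "alg.rel FI fi_mult (\<lambda>_ _. 0) (\<phi> (E x)) (E (f y) :: 'b \<Rightarrow> 'b \<Rightarrow> 'k)"
        by (rule I.B.rel_left[OF I.B.eqv_sym[OF fx] _ E_in])
      then show "alg.rel FI fi_mult (\<lambda>_ _. 0) (\<phi> (E x)) (\<phi> (E y))"
        by (rule I.B.rel_right[OF I.B.eqv_sym[OF fx] _ I.hA[OF E_in]])
    qed
    also have "\<dots> \<longleftrightarrow> f x \<le> f y" by (rule rel_E)
    finally show ?thesis .
  qed
  have "inj f"
  proof (rule injI)
    fix x y assume "f x = f y"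
    then show "x = y" using ord[of x y] ord[of y x] by (simp add: antisym)
  qed
  moreover have "surj f"
  proof -
    have "y \<in> range f" for y
    proof -
      obtain \<alpha> where a: "\<alpha> \<in> FI" "E y = \<phi> \<alpha>" using I.hsurj[OF E_in] by blast
      have "alg.prim FI fi_mult (\<lambda>_ _. 0) (\<phi> \<alpha>)" using prim_E a by metis
      then have "alg.prim FI fi_mult (\<lambda>_ _. 0) \<alpha>" using I.prim_iff[OF a(1)] by blast
      then obtain x where "alg.eqv FI fi_mult \<alpha> (E x :: 'a \<Rightarrow> 'a \<Rightarrow> 'k)" using prim_eqv_E by blast
      then have "alg.eqv FI fi_mult (\<phi> \<alpha>) (\<phi> (E x))" by (rule I.eqv_to)
      then have "alg.eqv FI fi_mult (E y) (E (f x) :: 'b \<Rightarrow> 'b \<Rightarrow> 'k)"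
        using I.B.eqv_trans fx a(2) by metis
      then have "y = f x" by (rule eqv_E)
      then show ?thesis by simp
    qed
    then show ?thesis by blast
  qed
  ultimately have "poset_iso f" unfolding poset_iso_def bij_def using ord by blast
  then show ?thesis by blast
qed

end
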